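(* Let $\mathbb{X}$ be a finite-dimensional strictly convex real Banach space and $\mathbb{Y}$ a finite-dimensional smooth real Banach space (both of dimension greater than $1$). Let $T\in\mathbb{L}(\mathbb{X},\mathbb{Y})$ with $\|T\|=1$. Then $T$ is a smooth point of $\mathbb{L}(\mathbb{X},\mathbb{Y})$ if and only if for every $\epsilon>0$, $T$ admits a uniform $\epsilon$-BPB approximation $A\neq T$ which is itself a smooth point of $\mathbb{L}(\mathbb{X},\mathbb{Y})$.
   Context: $\mathbb{L}(\mathbb{X},\mathbb{Y})$ is the space of linear operators with the operator norm; $S_{\mathbb{X}}$ is the unit sphere. $\mathbb{X}$ is strictly convex if every point of $S_{\mathbb{X}}$ is an extreme point of the unit ball. A nonzero element $x$ of a Banach space $\mathbb{Z}$ is a smooth point if there is a unique $f\in\mathbb{Z}^*$ with $\|f\|=1$ and $f(x)=\|x\|$; $\mathbb{Y}$ is smooth if all its nonzero points are smooth. For $T$ with $\|T\|=1$ and fixed $\epsilon>0$, an operator $A\in\mathbb{L}(\mathbb{X},\mathbb{Y})$ with $\|A\|=1$ is a uniform $\epsilon$-BPB approximation of $T$ if there exists $\delta(\epsilon)>0$ such that whenever $x_0\in S_{\mathbb{X}}$ satisfies $\|Tx_0\|>1-\delta(\epsilon)$, there exists $u_0\in S_{\mathbb{X}}$ with $\|Au_0\|=1$, $\|u_0-x_0\|<\epsilon$ and $\|A-T\|<\epsilon$. *)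

theory Defs
  imports "HOL-Analysis.Analysis"
begin

definition fin_dim_space :: "'a::real_normed_vector itself \<Rightarrow> bool" where
  "fin_dim_space _ \<longleftrightarrow> (\<exists>B::'a set. finite B \<and> span B = UNIV)"

definition strictly_convex_space :: "'a::real_normed_vector itself \<Rightarrow> bool" where
  "strictly_convex_space _ \<longleftrightarrow> (\<forall>x::'a \<in> sphere 0 1. x extreme_point_of cball 0 1)"

definition smooth_point :: "'z::real_normed_vector \<Rightarrow> bool" where
  "smooth_point x \<longleftrightarrow> x \<noteq> 0 \<and>
     (\<exists>!f::'z \<Rightarrow>\<^sub>L real. norm f = 1 \<and> blinfun_apply f x = norm x)"

definition smooth_space :: "'a::real_normed_vector itself \<Rightarrow> bool" where
  "smooth_space _ \<longleftrightarrow> (\<forall>y::'a. y \<noteq> 0 \<longrightarrow> smooth_point y)"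

text \<open>Uniform epsilon-BPB approximation A of T (with norm T = 1 assumed separately).\<close>
definition uniform_BPB_approx ::
  "real \<Rightarrow> ('a::real_normed_vector \<Rightarrow>\<^sub>L 'b::real_normed_vector) \<Rightarrow> ('a \<Rightarrow>\<^sub>L 'b) \<Rightarrow> bool" where
  "uniform_BPB_approx \<epsilon> T A \<longleftrightarrow> norm A = 1 \<and>
     (\<exists>\<delta>>0. \<forall>x0 \<in> sphere 0 1. norm (T x0) > 1 - \<delta> \<longrightarrow>
        (\<exists>u0 \<in> sphere 0 1. norm (A u0) = 1 \<and> norm (u0 - x0) < \<epsilon> \<and> norm (A - T) < \<epsilon>))"

end

theory Submission
  imports Defs "HOL-Analysis.Analysis"
begin


lemma fin_span_subseq:
  fixes B :: "'a::real_normed_vector set"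
  assumes "finite B"
  shows "\<forall>f. (\<forall>n. f n \<in> span B) \<longrightarrow> bounded (range f) \<longrightarrow>
           (\<exists>l\<in>span B. \<exists>r::nat\<Rightarrow>nat. strict_mono r \<and> (f \<circ> r) \<longlonglongrightarrow> l)"
  using assms
proof (induction B rule: finite_induct)
  case empty
  show ?case
  proof (intro allI impI)
    fix f :: "nat \<Rightarrow> 'a" assume "\<forall>n. f n \<in> span {}"
    then have "\<forall>n. f n = 0" by simp
    then show "\<exists>l\<in>span {}. \<exists>r::nat\<Rightarrow>nat. strict_mono r \<and> (f \<circ> r) \<longlonglongrightarrow> l"
      by (intro bexI[of _ 0] exI[of _ id]) (auto simp: strict_mono_def o_def)
  qed
next
  case (insert b B)
  have clo: "closed (span B)"
  proof (rule closed_sequential_limits[THEN iffD2], intro allI impI, elim conjE)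
    fix x l assume xs: "\<forall>n. x n \<in> span B" and xl: "x \<longlonglongrightarrow> l"
    have "bounded (range x)" using xl by (rule convergent_imp_bounded)
    then obtain l' r where l': "l' \<in> span B" "strict_mono r" "(x \<circ> r) \<longlonglongrightarrow> l'"
      using insert.IH xs by blast
    have "(x \<circ> r) \<longlonglongrightarrow> l" using xl l'(2) by (rule LIMSEQ_subseq_LIMSEQ)
    then have "l = l'" using l'(3) LIMSEQ_unique by blast
    then show "l \<in> span B" using l' by simp
  qed
  show ?case
  proof (cases "b \<in> span B")
    case True
    then have "span (insert b B) = span B" by (simp add: span_redundant)
    then show ?thesis using insert.IH by simp
  next
    case False
    define d where "d = infdist b (span B)"
    have dpos: "d > 0" unfolding d_def
      using infdist_pos_not_in_closed[OF clo _ False] span_zero by blast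
    have key: "\<bar>t\<bar> * d \<le> norm (y + t *\<^sub>R b)" if "y \<in> span B" for y t
    proof (cases "t = 0")
      case True then show ?thesis by simp
    next
      case False
      have m: "- (1/t) *\<^sub>R y \<in> span B" using that by (simp add: span_scale span_neg)
      have "d \<le> dist b (- (1/t) *\<^sub>R y)" unfolding d_def by (rule infdist_le[OF m])
      also have "dist b (- (1/t) *\<^sub>R y) = norm (b + (1/t) *\<^sub>R y)"
        by (simp add: dist_norm)
      also have "b + (1/t) *\<^sub>R y = (1/t) *\<^sub>R (y + t *\<^sub>R b)"
        using False by (simp add: algebra_simps)
      finally have "d \<le> norm ((1/t) *\<^sub>R (y + t *\<^sub>R b))" .
      then have "d \<le> norm (y + t *\<^sub>R b) / \<bar>t\<bar>" by simp
      then show ?thesis using False by (simp add: field_simps)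
    qed
    show ?thesis
    proof (intro allI impI)
      fix f :: "nat \<Rightarrow> 'a"
      assume fs: "\<forall>n. f n \<in> span (insert b B)" and fb: "bounded (range f)"
      obtain M where M: "\<And>n. norm (f n) \<le> M"
        using fb by (auto simp: bounded_iff)
      have "\<forall>n. \<exists>t. f n - t *\<^sub>R b \<in> span B" using fs span_breakdown_eq by blast
      then obtain t where t: "\<And>n. f n - t n *\<^sub>R b \<in> span B" by metis
      define y where "y n = f n - t n *\<^sub>R b" for n
      have fy: "f n = y n + t n *\<^sub>R b" for n by (simp add: y_def)
      have tb: "\<bar>t n\<bar> \<le> M / d" for n
      proof -
        have "\<bar>t n\<bar> * d \<le> norm (f n - t n *\<^sub>R b + t n *\<^sub>R b)" by (rule key[OF t[of n]])
        then have "\<bar>t n\<bar> * d \<le> M" using M[of n] by simp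
        then show ?thesis using dpos by (simp add: field_simps)
      qed
      have "bounded (range t)" using tb unfolding bounded_iff by (auto simp: real_norm_def)
      then obtain \<tau> r1 where r1: "strict_mono r1" "(t \<circ> r1) \<longlonglongrightarrow> \<tau>"
        using bounded_imp_convergent_subsequence by blast
      have yb: "norm (y n) \<le> M + M / d * norm b" for n
      proof -
        have "norm (y n) \<le> norm (f n) + norm (t n *\<^sub>R b)" unfolding y_def by (rule norm_triangle_ineq4)
        also have "\<dots> \<le> M + M / d * norm b"
        proof -
          have "norm (t n *\<^sub>R b) \<le> M / d * norm b"
            using mult_right_mono[OF tb[of n] norm_ge_zero[of b]] by simp
          then show ?thesis using M[of n] by (rule add_mono[rotated])
        qed
        finally show ?thesis .
      qed
      have "bounded (range (y \<circ> r1))" using yb unfolding bounded_iff by auto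
      moreover have "\<forall>n. (y \<circ> r1) n \<in> span B" using t by (simp add: y_def)
      ultimately obtain l r2 where r2: "l \<in> span B" "strict_mono r2" "((y \<circ> r1) \<circ> r2) \<longlonglongrightarrow> l"
        using insert.IH by blast
      have tl: "((t \<circ> r1) \<circ> r2) \<longlonglongrightarrow> \<tau>" using r1(2) r2(2) by (rule LIMSEQ_subseq_LIMSEQ)
      have "(\<lambda>n. ((y \<circ> r1) \<circ> r2) n + ((t \<circ> r1) \<circ> r2) n *\<^sub>R b) \<longlonglongrightarrow> l + \<tau> *\<^sub>R b"
        by (intro tendsto_intros r2(3) tl)
      then have "(f \<circ> (r1 \<circ> r2)) \<longlonglongrightarrow> l + \<tau> *\<^sub>R b" by (simp add: fy o_def)
      moreover have "strict_mono (r1 \<circ> r2)" using r1(1) r2(2) by (rule strict_mono_o)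
      moreover have "l + \<tau> *\<^sub>R b \<in> span (insert b B)"
        using r2(1) by (meson span_add span_base span_mono span_scale insertI1 subset_insertI subsetD)
      ultimately show "\<exists>l\<in>span (insert b B). \<exists>r::nat\<Rightarrow>nat. strict_mono r \<and> (f \<circ> r) \<longlonglongrightarrow> l"
        by blast
    qed
  qed
qed

lemma compact_sphere_fin:
  fixes B :: "'a::real_normed_vector set"
  assumes "finite B" "span B = UNIV"
  shows "compact (sphere (0::'a) 1)"
proof -
  have "seq_compact (sphere (0::'a) 1)"
  proof (rule seq_compactI)
    fix f :: "nat \<Rightarrow> 'a" assume f: "\<forall>n. f n \<in> sphere 0 1"
    then have "bounded (range f)" unfolding bounded_iff by auto
    then obtain l r where lr: "strict_mono r" "(f \<circ> r) \<longlonglongrightarrow> l"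
      using fin_span_subseq[OF assms(1)] assms(2) by blast
    have "l \<in> sphere 0 1"
    proof -
      have "(\<lambda>n. norm ((f \<circ> r) n)) \<longlonglongrightarrow> norm l" by (intro tendsto_norm lr(2))
      moreover have "(\<lambda>n. norm ((f \<circ> r) n)) = (\<lambda>n. 1)" using f by auto
      ultimately have "norm l = 1" using LIMSEQ_unique tendsto_const by metis
      then show ?thesis by simp
    qed
    then show "\<exists>l\<in>sphere 0 1. \<exists>r::nat\<Rightarrow>nat. strict_mono r \<and> (f \<circ> r) \<longlonglongrightarrow> l" using lr by blast
  qed
  then show ?thesis using compact_eq_seq_compact_metric by blast
qed



definition rk1 :: "('a::real_normed_vector \<Rightarrow>\<^sub>L real) \<Rightarrow> 'b::real_normed_vector \<Rightarrow> 'a \<Rightarrow>\<^sub>L 'b" where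
  "rk1 \<psi> y = Blinfun (\<lambda>x. \<psi> x *\<^sub>R y)"

lemma rk1_apply[simp]: "blinfun_apply (rk1 \<psi> y) x = \<psi> x *\<^sub>R y"
  unfolding rk1_def
  by (subst bounded_linear_Blinfun_apply)
     (auto intro!: bounded_linear_compose[OF bounded_linear_scaleR_left] blinfun.bounded_linear_right)

lemma norm_rk1: "norm (rk1 \<psi> y) \<le> norm \<psi> * norm y"
proof (rule norm_blinfun_bound)
  show "0 \<le> norm \<psi> * norm y" by simp
  fix x
  have "norm (\<psi> x *\<^sub>R y) = \<bar>\<psi> x\<bar> * norm y" by simp
  also have "\<dots> \<le> (norm \<psi> * norm x) * norm y"
    using norm_blinfun[of \<psi> x] by (intro mult_right_mono) auto
  finally show "norm (blinfun_apply (rk1 \<psi> y) x) \<le> norm \<psi> * norm y * norm x"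
    by (simp add: algebra_simps)
qed

lemma bl_rk1: "bounded_linear (rk1 \<psi>)"
proof (rule bounded_linear_intro[of _ "norm \<psi>"])
  show "rk1 \<psi> (a + b) = rk1 \<psi> a + rk1 \<psi> b" for a b
    by (rule blinfun_eqI) (simp add: plus_blinfun.rep_eq scaleR_add_right)
  show "rk1 \<psi> (r *\<^sub>R a) = r *\<^sub>R rk1 \<psi> a" for r a
    by (rule blinfun_eqI) (simp add: scaleR_blinfun.rep_eq)
  show "norm (rk1 \<psi> a) \<le> norm a * norm \<psi>" for a
    using norm_rk1[of \<psi> a] by (simp add: mult.commute)
qed

lemma rk1_diff: "rk1 \<psi> a - rk1 \<psi> b = rk1 \<psi> (a - b)"
  by (rule blinfun_eqI) (simp add: minus_blinfun.rep_eq scaleR_diff_right)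

definition ev :: "('b::real_normed_vector \<Rightarrow>\<^sub>L real) \<Rightarrow> 'a::real_normed_vector \<Rightarrow> ('a \<Rightarrow>\<^sub>L 'b) \<Rightarrow>\<^sub>L real" where
  "ev g u = Blinfun (\<lambda>V::'a \<Rightarrow>\<^sub>L 'b. g (blinfun_apply V u))"

lemma ev_apply[simp]: "blinfun_apply (ev g u) V = g (V u)"
  unfolding ev_def
  by (subst bounded_linear_Blinfun_apply)
     (auto intro: bounded_linear_blinfun_apply blinfun.bounded_linear_left)

lemma norm_ev: "norm (ev g u) \<le> norm g * norm u"
proof (rule norm_blinfun_bound)
  show "0 \<le> norm g * norm u" by simp
  fix V :: "'a \<Rightarrow>\<^sub>L 'b"
  have "norm (g (V u)) \<le> norm g * norm (V u)" by (rule norm_blinfun)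
  also have "\<dots> \<le> norm g * (norm V * norm u)"
    by (intro mult_left_mono norm_blinfun) simp
  finally show "norm (blinfun_apply (ev g u) V) \<le> norm g * norm u * norm V"
    by (simp add: algebra_simps)
qed

lemma sphere_bound:
  fixes W :: "'a::real_normed_vector \<Rightarrow>\<^sub>L 'b::real_normed_vector"
  assumes "\<And>x. x \<in> sphere 0 1 \<Longrightarrow> norm (W x) \<le> M" "0 \<le> M"
  shows "norm W \<le> M"
proof (rule norm_blinfun_bound[OF assms(2)])
  fix x :: 'a
  show "norm (W x) \<le> M * norm x"
  proof (cases "x = 0")
    case True then show ?thesis by simp
  next
    case False
    have "(1 / norm x) *\<^sub>R x \<in> sphere 0 1" using False by simp
    then have "norm (W ((1 / norm x) *\<^sub>R x)) \<le> M" by (rule assms(1))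
    then have "norm (W x) / norm x \<le> M" by (simp add: blinfun.scaleR_right)
    then show ?thesis using False by (simp add: field_simps)
  qed
qed

lemma norm_attained:
  fixes S :: "'a::real_normed_vector \<Rightarrow>\<^sub>L 'b::real_normed_vector"
  assumes "compact (sphere (0::'a) 1)" "sphere (0::'a) 1 \<noteq> {}"
  shows "\<exists>x\<in>sphere 0 1. norm (S x) = norm S"
proof -
  have "continuous_on (sphere 0 1) (\<lambda>x. norm (S x))"
    by (intro continuous_intros)
  then obtain x where x: "x \<in> sphere 0 1" "\<And>y. y \<in> sphere 0 1 \<Longrightarrow> norm (S y) \<le> norm (S x)"
    using continuous_attains_sup[OF assms] by blast
  have "norm S \<le> norm (S x)" by (rule sphere_bound) (use x in auto)
  moreover have "norm (S x) \<le> norm S" using norm_blinfun[of S x] x(1) by simp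
  ultimately show ?thesis using x(1) by (intro bexI[of _ x]) auto
qed

lemma near_norming:
  fixes S :: "'a::real_normed_vector \<Rightarrow>\<^sub>L 'b::real_normed_vector"
  assumes cpt: "compact (sphere (0::'a) 1)"
    and uniq: "\<forall>x\<in>sphere 0 1. norm (S x) = 1 \<longrightarrow> x = u \<or> x = - u"
    and nS: "norm S = 1" and eta: "\<eta> > 0"
  shows "\<exists>\<rho>>0. \<forall>x\<in>sphere 0 1. norm (S x) > 1 - \<rho> \<longrightarrow> norm (x - u) < \<eta> \<or> norm (x + u) < \<eta>"
proof -
  define K where "K = sphere (0::'a) 1 \<inter> {x. \<eta> \<le> norm (x - u) \<and> \<eta> \<le> norm (x + u)}"
  have cK: "compact K" unfolding K_def
    by (intro compact_Int_closed cpt closed_Collect_conj closed_Collect_le continuous_intros)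
  show ?thesis
  proof (cases "K = {}")
    case True
    show ?thesis
      by (rule exI[of _ 1]) (use True in \<open>auto simp: K_def not_le\<close>)
  next
    case False
    have "continuous_on K (\<lambda>x. norm (S x))" by (intro continuous_intros)
    then obtain xm where xm: "xm \<in> K" "\<And>y. y \<in> K \<Longrightarrow> norm (S y) \<le> norm (S xm)"
      using continuous_attains_sup[OF cK False] by blast
    have xms: "xm \<in> sphere 0 1" using xm(1) by (simp add: K_def)
    have "norm (S xm) \<le> 1" using norm_blinfun[of S xm] xms nS by simp
    moreover have "norm (S xm) \<noteq> 1"
    proof
      assume "norm (S xm) = 1"
      then have "xm = u \<or> xm = - u" using uniq xms by blast
      then show False using xm(1) eta by (auto simp: K_def)
    qed
    ultimately have lt: "norm (S xm) < 1" by simp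
    show ?thesis
    proof (rule exI[of _ "1 - norm (S xm)"], intro conjI ballI impI)
      show "0 < 1 - norm (S xm)" using lt by simp
      fix x assume x: "x \<in> sphere 0 1" "1 - (1 - norm (S xm)) < norm (S x)"
      then have "x \<notin> K" using xm(2)[of x] by auto
      then show "norm (x - u) < \<eta> \<or> norm (x + u) < \<eta>" using x(1) by (auto simp: K_def)
    qed
  qed
qed

lemma smooth_pointD:
  assumes "smooth_point y"
  shows "y \<noteq> 0" "\<exists>g. norm g = 1 \<and> blinfun_apply g y = norm y"
    "\<And>g1 g2. norm g1 = 1 \<Longrightarrow> blinfun_apply g1 y = norm y \<Longrightarrow> norm g2 = 1 \<Longrightarrow> blinfun_apply g2 y = norm y \<Longrightarrow> g1 = g2"
  using assms unfolding smooth_point_def by blast+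

lemma functional_norm1:
  fixes F :: "'z::real_normed_vector \<Rightarrow>\<^sub>L real"
  assumes "norm F \<le> 1" "F S = 1" "norm S = 1"
  shows "norm F = 1"
proof -
  have "1 \<le> norm F * norm S" using norm_blinfun[of F S] assms(2) by simp
  then show ?thesis using assms by simp
qed

lemma sc_lemma:
  fixes \<psi> :: "'a::real_normed_vector \<Rightarrow>\<^sub>L real"
  assumes sc: "strictly_convex_space TYPE('a)" and n: "norm \<psi> \<le> 1"
    and u: "u1 \<in> sphere 0 1" "u2 \<in> sphere 0 1" "\<psi> u1 = 1" "\<psi> u2 = 1"
  shows "u1 = u2"
proof (rule ccontr)
  assume ne: "u1 \<noteq> u2"
  define m where "m = midpoint u1 u2"
  have "\<psi> m = (\<psi> u1 + \<psi> u2) / 2"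
    by (simp add: m_def midpoint_def blinfun.scaleR_right blinfun.add_right)
  then have pm: "\<psi> m = 1" using u by simp
  have "1 \<le> norm \<psi> * norm m" using norm_blinfun[of \<psi> m] pm by simp
  also have "\<dots> \<le> norm m" using n by (simp add: mult_left_le_one_le)
  finally have m1: "1 \<le> norm m" .
  have "norm m \<le> (norm u1 + norm u2) / 2"
    unfolding m_def midpoint_def using norm_triangle_ineq[of u1 u2] by simp
  then have "norm m = 1" using m1 u by simp
  then have "m extreme_point_of cball 0 1"
    using sc unfolding strictly_convex_space_def by simp
  moreover have "m \<in> open_segment u1 u2" using ne by (simp add: m_def)
  ultimately show False using u unfolding extreme_point_of_def by auto
qed



lemma smooth_unique_norming:
  fixes S :: "'a::real_normed_vector \<Rightarrow>\<^sub>L 'b::real_normed_vector"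
  assumes sc: "strictly_convex_space TYPE('a)" and sy: "smooth_space TYPE('b)"
    and sS: "smooth_point S" and nS: "norm S = 1"
    and u1: "u1 \<in> sphere 0 1" "norm (S u1) = 1"
    and u2: "u2 \<in> sphere 0 1" "norm (S u2) = 1"
  shows "u2 = u1 \<or> u2 = - u1"
proof -
  have sp1: "smooth_point (S u1)" using sy u1 unfolding smooth_space_def by (metis norm_zero zero_neq_one)
  have sp2: "smooth_point (S u2)" using sy u2 unfolding smooth_space_def by (metis norm_zero zero_neq_one)
  obtain g1 :: "'b \<Rightarrow>\<^sub>L real" where g1: "norm g1 = 1" "g1 (S u1) = 1" using smooth_pointD(2)[OF sp1] u1 by auto
  obtain g2 :: "'b \<Rightarrow>\<^sub>L real" where g2: "norm g2 = 1" "g2 (S u2) = 1" using smooth_pointD(2)[OF sp2] u2 by auto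
  have F1: "norm (ev g1 u1) = 1"
    by (rule functional_norm1[OF _ _ nS]) (use norm_ev[of g1 u1] g1 u1 in auto)
  have F2: "norm (ev g2 u2) = 1"
    by (rule functional_norm1[OF _ _ nS]) (use norm_ev[of g2 u2] g2 u2 in auto)
  have eq: "ev g1 u1 = ev g2 u2"
    by (rule smooth_pointD(3)[OF sS]) (use F1 F2 g1 g2 nS in auto)
  define \<psi> where "\<psi> = g1 o\<^sub>L S"
  have npsi: "norm \<psi> \<le> 1"
    using norm_blinfun_compose[of g1 S] g1 nS by (simp add: \<psi>_def)
  have psi1: "\<psi> u1 = 1" using g1 by (simp add: \<psi>_def)
  define V where "V = rk1 \<psi> (S u1)"
  have "ev g1 u1 V = 1" using g1 psi1 by (simp add: V_def blinfun.scaleR_right)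
  moreover have "ev g2 u2 V = \<psi> u2 * g2 (S u1)" by (simp add: V_def blinfun.scaleR_right)
  ultimately have prod: "\<psi> u2 * g2 (S u1) = 1" using eq by simp
  have a: "\<bar>\<psi> u2\<bar> \<le> 1" using norm_blinfun[of \<psi> u2] npsi u2 
    by (simp add: mult_left_le_one_le order_trans)
  have b: "\<bar>g2 (S u1)\<bar> \<le> 1" using norm_blinfun[of g2 "S u1"] g2 u1 by simp
  have "1 = \<bar>\<psi> u2\<bar> * \<bar>g2 (S u1)\<bar>" using prod by (metis abs_mult abs_one)
  also have "\<dots> \<le> \<bar>\<psi> u2\<bar>" using b by (simp add: mult_left_le_one_le mult_left_le)
  finally have "\<bar>\<psi> u2\<bar> = 1" using a by simp
  then consider "\<psi> u2 = 1" | "\<psi> (- u2) = 1" by (auto simp: blinfun.minus_right abs_if split: if_splits)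
  then show ?thesis
  proof cases
    case 1
    then show ?thesis using sc_lemma[OF sc npsi u1(1) u2(1) psi1] by simp
  next
    case 2
    have "- u2 \<in> sphere 0 1" using u2 by simp
    then show ?thesis using sc_lemma[OF sc npsi u1(1) _ psi1 2] by auto
  qed
qed



lemma unique_norming_smooth:
  fixes S :: "'a::real_normed_vector \<Rightarrow>\<^sub>L 'b::real_normed_vector"
  assumes cpt: "compact (sphere (0::'a) 1)" and sy: "smooth_space TYPE('b)"
    and nS: "norm S = 1" and u: "u \<in> sphere 0 1" "norm (S u) = 1"
    and uniq: "\<forall>x\<in>sphere 0 1. norm (S x) = 1 \<longrightarrow> x = u \<or> x = - u"
  shows "smooth_point S"
proof -
  have spu: "smooth_point (S u)" using sy u unfolding smooth_space_def by (metis norm_zero zero_neq_one)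
  obtain g :: "'b \<Rightarrow>\<^sub>L real" where g: "norm g = 1" "g (S u) = 1"
    using smooth_pointD(2)[OF spu] u by auto
  have F: "norm (ev g u) = 1"
    by (rule functional_norm1[OF _ _ nS]) (use norm_ev[of g u] g u in auto)
  have S0: "S \<noteq> 0" using nS by auto
  have main: "G = ev g u" if G: "norm G = 1" "G S = norm S" for G :: "('a \<Rightarrow>\<^sub>L 'b) \<Rightarrow>\<^sub>L real"
  proof -
    have GS: "G S = 1" using G nS by simp
    have Gle: "G W \<le> norm W" for W
      using norm_blinfun[of G W] G(1) by simp
    have kill_le: "G V \<le> 0" if Vu: "V u = 0" for V :: "'a \<Rightarrow>\<^sub>L 'b"
    proof (rule ccontr)
      assume "\<not> G V \<le> 0"
      then have c: "G V > 0" by simp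
      define K where "K = norm V + 1"
      have Kpos: "K > 0" by (simp add: K_def add_nonneg_pos)
      define \<eta> where "\<eta> = G V / (2 * K)"
      have eta: "\<eta> > 0" using c Kpos by (simp add: \<eta>_def)
      obtain \<rho> where rho: "\<rho> > 0"
        "\<And>x. x \<in> sphere 0 1 \<Longrightarrow> norm (S x) > 1 - \<rho> \<Longrightarrow> norm (x - u) < \<eta> \<or> norm (x + u) < \<eta>"
        using near_norming[OF cpt uniq nS eta] by blast
      define h where "h = \<rho> / K"
      have hpos: "h > 0" using rho Kpos by (simp add: h_def)
      have hK: "h * K = \<rho>" using Kpos by (simp add: h_def)
      have bnd: "norm (S + h *\<^sub>R V) \<le> 1 + h * K * \<eta>"
      proof (rule sphere_bound)
        show "0 \<le> 1 + h * K * \<eta>" using hpos Kpos eta by simp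
        fix x :: 'a assume x: "x \<in> sphere 0 1"
        have app: "(S + h *\<^sub>R V) x = S x + h *\<^sub>R V x"
          by (simp add: plus_blinfun.rep_eq scaleR_blinfun.rep_eq)
        have Sx: "norm (S x) \<le> 1" using norm_blinfun[of S x] nS x by simp
        have V1: "norm (V x) \<le> norm V * norm (x - u)"
        proof -
          have "V x = V (x - u)" using Vu by (simp add: blinfun.diff_right)
          then show ?thesis using norm_blinfun[of V "x - u"] by simp
        qed
        have V2: "norm (V x) \<le> norm V * norm (x + u)"
        proof -
          have "V x = V (x + u)" using Vu by (simp add: blinfun.add_right)
          then show ?thesis using norm_blinfun[of V "x + u"] by simp
        qed
        have V3: "norm (V x) \<le> K" using norm_blinfun[of V x] x by (simp add: K_def)
        have tri: "norm ((S + h *\<^sub>R V) x) \<le> norm (S x) + h * norm (V x)"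
          unfolding app using norm_triangle_ineq[of "S x" "h *\<^sub>R V x"] hpos by simp
        show "norm ((S + h *\<^sub>R V) x) \<le> 1 + h * K * \<eta>"
        proof (cases "norm (S x) > 1 - \<rho>")
          case True
          have "norm (V x) \<le> K * \<eta>"
          proof -
            have "norm (V x) \<le> norm V * \<eta>"
            proof (cases "norm (x - u) < \<eta>")
              case True
              have "norm V * norm (x - u) \<le> norm V * \<eta>"
                using True by (intro mult_left_mono) auto
              then show ?thesis using V1 by linarith
            next
              case False
              then have "norm (x + u) < \<eta>" using rho(2)[OF x \<open>norm (S x) > 1 - \<rho>\<close>] by blast
              then have "norm V * norm (x + u) \<le> norm V * \<eta>"
                by (intro mult_left_mono) auto
              then show ?thesis using V2 by linarith
            qed
            also have "\<dots> \<le> K * \<eta>" using eta by (simp add: K_def)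
            finally show ?thesis .
          qed
          then have "h * norm (V x) \<le> h * (K * \<eta>)" using hpos by (simp add: mult_left_mono)
          moreover have "h * (K * \<eta>) = h * K * \<eta>" by simp
          ultimately show ?thesis using tri Sx by linarith
        next
          case False
          have "h * norm (V x) \<le> h * K" using hpos V3 by (simp add: mult_left_mono)
          then have "norm ((S + h *\<^sub>R V) x) \<le> 1" using tri False hK by simp
          moreover have "0 \<le> h * K * \<eta>" using hpos Kpos eta by simp
          ultimately show ?thesis by simp
        qed
      qed
      have "G (S + h *\<^sub>R V) = 1 + h * G V"
        using GS by (simp add: blinfun.add_right blinfun.scaleR_right)
      then have "1 + h * G V \<le> 1 + h * K * \<eta>" using Gle[of "S + h *\<^sub>R V"] bnd by simp
      moreover have "h * K * \<eta> = h * G V / 2" using Kpos by (simp add: \<eta>_def)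
      ultimately have "h * G V \<le> h * G V / 2" by simp
      then show False using hpos c by (simp add: field_simps)
    qed
    have kill: "G V = 0" if Vu: "V u = 0" for V :: "'a \<Rightarrow>\<^sub>L 'b"
    proof -
      have "(- V) u = 0" using Vu by (simp add: uminus_blinfun.rep_eq)
      then have "G (- V) \<le> 0" by (rule kill_le)
      then have "- G V \<le> 0" by (simp add: blinfun.minus_right)
      then show ?thesis using kill_le[OF Vu] by simp
    qed
    define \<psi> where "\<psi> = g o\<^sub>L S"
    have npsi: "norm \<psi> \<le> 1"
      using norm_blinfun_compose[of g S] g nS by (simp add: \<psi>_def)
    have psi1: "\<psi> u = 1" using g by (simp add: \<psi>_def)
    define k where "k = Blinfun (\<lambda>y. G (rk1 \<psi> y))"
    have k_apply: "k y = G (rk1 \<psi> y)" for y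
      unfolding k_def
      by (subst bounded_linear_Blinfun_apply) (auto intro: bounded_linear_blinfun_apply bl_rk1)
    have GV: "G V = k (V u)" for V :: "'a \<Rightarrow>\<^sub>L 'b"
    proof -
      have "(V - rk1 \<psi> (V u)) u = 0" using psi1 by (simp add: minus_blinfun.rep_eq)
      then have "G (V - rk1 \<psi> (V u)) = 0" by (rule kill)
      then show ?thesis by (simp add: k_apply blinfun.diff_right)
    qed
    have kSu: "k (S u) = 1" using GV[of S] GS by simp
    have nk: "norm k \<le> 1"
    proof (rule norm_blinfun_bound)
      show "0 \<le> (1::real)" by simp
      fix y
      have "norm (k y) \<le> norm G * norm (rk1 \<psi> y)" unfolding k_apply by (rule norm_blinfun)
      also have "\<dots> \<le> norm \<psi> * norm y" using G(1) norm_rk1[of \<psi> y] by simp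
      also have "\<dots> \<le> 1 * norm y" using npsi by (intro mult_right_mono) auto
      finally show "norm (k y) \<le> 1 * norm y" .
    qed
    have nk1: "norm k = 1" by (rule functional_norm1[OF nk kSu u(2)])
    have "k = g" by (rule smooth_pointD(3)[OF spu]) (use nk1 kSu g u in auto)
    then show "G = ev g u" by (intro blinfun_eqI) (simp add: GV)
  qed
  show ?thesis unfolding smooth_point_def
  proof (intro conjI)
    show "S \<noteq> 0" by (rule S0)
    show "\<exists>!f::('a \<Rightarrow>\<^sub>L 'b) \<Rightarrow>\<^sub>L real. norm f = 1 \<and> blinfun_apply f S = norm S"
    proof (rule ex1I[of _ "ev g u"])
      show "norm (ev g u) = 1 \<and> ev g u S = norm S" using F g nS by simp
      fix G :: "('a \<Rightarrow>\<^sub>L 'b) \<Rightarrow>\<^sub>L real"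
      assume "norm G = 1 \<and> G S = norm S"
      then show "G = ev g u" using main by blast
    qed
  qed
qed



lemma BPB_of:
  fixes T A :: "'a::real_normed_vector \<Rightarrow>\<^sub>L 'b::real_normed_vector"
  assumes cpt: "compact (sphere (0::'a) 1)" and nT: "norm T = 1"
    and uniq: "\<forall>x\<in>sphere 0 1. norm (T x) = 1 \<longrightarrow> x = x0 \<or> x = - x0"
    and x0s: "x0 \<in> sphere 0 1"
    and nA: "norm A = 1" and Ax0: "norm (A x0) = 1" and AT: "norm (A - T) < \<epsilon>"
  shows "uniform_BPB_approx \<epsilon> T A"
proof -
  have eps: "\<epsilon> > 0" using AT norm_ge_zero[of "A - T"] by linarith
  obtain \<rho> where rho: "\<rho> > 0"
    "\<forall>x\<in>sphere 0 1. norm (T x) > 1 - \<rho> \<longrightarrow> norm (x - x0) < \<epsilon> \<or> norm (x + x0) < \<epsilon>"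
    using near_norming[OF cpt uniq nT eps] by blast
  have Amx0: "norm (A (- x0)) = 1" using Ax0 by (simp add: blinfun.minus_right)
  have mx0: "- x0 \<in> sphere 0 1" using x0s by simp
  show ?thesis unfolding uniform_BPB_approx_def
  proof (intro conjI exI[of _ \<rho>] ballI impI)
    show "norm A = 1" by (rule nA)
    show "0 < \<rho>" by (rule rho(1))
    fix x assume x: "x \<in> sphere 0 1" "1 - \<rho> < norm (T x)"
    then consider "norm (x - x0) < \<epsilon>" | "norm (x + x0) < \<epsilon>" using rho(2) by blast
    then show "\<exists>u0\<in>sphere 0 1. norm (A u0) = 1 \<and> norm (u0 - x) < \<epsilon> \<and> norm (A - T) < \<epsilon>"
    proof cases
      case 1
      have "norm (x0 - x) = norm (x - x0)" by (rule norm_minus_commute)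
      then show ?thesis using x0s Ax0 AT 1 by (intro bexI[of _ x0]) auto
    next
      case 2
      have "norm (- x0 - x) = norm (x + x0)"
        using norm_minus_cancel[of "x + x0"] by (simp add: algebra_simps)
      then show ?thesis using mx0 Amx0 AT 2 by (intro bexI[of _ "- x0"]) auto
    qed
  qed
qed

lemma exists_nonzero:
  assumes "dim (UNIV::'a::real_normed_vector set) > 1"
  shows "\<exists>x::'a. x \<noteq> 0"
proof (rule ccontr)
  assume "\<not> (\<exists>x::'a. x \<noteq> 0)"
  then have "(UNIV::'a set) \<subseteq> span {}" by auto
  then have "dim (UNIV::'a set) \<le> card ({}::'a set)" by (rule dim_le_card) simp
  then show False using assms by simp
qed

lemma exists_nonmultiple:
  assumes "dim (UNIV::'a::real_normed_vector set) > 1"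
  shows "\<exists>z::'a. \<forall>c. z \<noteq> c *\<^sub>R y"
proof (rule ccontr)
  assume "\<not> (\<exists>z::'a. \<forall>c. z \<noteq> c *\<^sub>R y)"
  then have "(UNIV::'a set) \<subseteq> span {y}" by (auto simp: span_singleton)
  then have "dim (UNIV::'a set) \<le> card {y}" by (rule dim_le_card) simp
  then show False using assms by simp
qed


theorem theorem2p8:
  fixes T :: "'a::banach \<Rightarrow>\<^sub>L 'b::banach"
  assumes "fin_dim_space TYPE('a)" and "fin_dim_space TYPE('b)"
    and "dim (UNIV::'a set) > 1" and "dim (UNIV::'b set) > 1"
    and "strictly_convex_space TYPE('a)" and "smooth_space TYPE('b)"
    and "norm T = 1"
  shows "smooth_point T \<longleftrightarrow>
    (\<forall>\<epsilon>>0. \<exists>A. uniform_BPB_approx \<epsilon> T A \<and> A \<noteq> T \<and> smooth_point A)"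
proof -
  obtain BX :: "'a set" where BX: "finite BX" "span BX = UNIV"
    using assms(1) unfolding fin_dim_space_def by blast
  have cpt: "compact (sphere (0::'a) 1)" by (rule compact_sphere_fin[OF BX])
  obtain xn :: 'a where xn: "xn \<noteq> 0" using exists_nonzero[OF assms(3)] by blast
  then have "(1 / norm xn) *\<^sub>R xn \<in> sphere 0 1" by simp
  then have ne: "sphere (0::'a) 1 \<noteq> {}" by blast
  obtain x0 where x0: "x0 \<in> sphere 0 1" "norm (T x0) = 1"
    using norm_attained[OF cpt ne, of T] assms(7) by auto
  have Tle: "norm (T x) \<le> 1" if "x \<in> sphere 0 1" for x
    using norm_blinfun[of T x] assms(7) that by simp
  show ?thesis
  proof
    assume sT: "smooth_point T"
    have uniq: "\<forall>x\<in>sphere 0 1. norm (T x) = 1 \<longrightarrow> x = x0 \<or> x = - x0"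
      using smooth_unique_norming[OF assms(5) assms(6) sT assms(7) x0] by blast
    define y0 where "y0 = T x0"
    have y0n: "norm y0 = 1" using x0 y0_def by simp
    have spy: "smooth_point y0"
      using assms(6) y0n unfolding smooth_space_def by (metis norm_zero zero_neq_one)
    obtain g :: "'b \<Rightarrow>\<^sub>L real" where g: "norm g = 1" "g y0 = 1"
      using smooth_pointD(2)[OF spy] y0n by auto
    define \<psi> where "\<psi> = g o\<^sub>L T"
    have npsi: "norm \<psi> \<le> 1"
      using norm_blinfun_compose[of g T] g assms(7) by (simp add: \<psi>_def)
    have psi1: "\<psi> x0 = 1" using g by (simp add: \<psi>_def y0_def)
    have psiT: "\<bar>\<psi> x\<bar> \<le> norm (T x)" for x
      using norm_blinfun[of g "T x"] g by (simp add: \<psi>_def)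
    show "\<forall>\<epsilon>>0. \<exists>A. uniform_BPB_approx \<epsilon> T A \<and> A \<noteq> T \<and> smooth_point A"
    proof (intro allI impI)
      fix \<epsilon> :: real assume eps: "\<epsilon> > 0"
      show "\<exists>A. uniform_BPB_approx \<epsilon> T A \<and> A \<noteq> T \<and> smooth_point A"
      proof (cases "T = rk1 \<psi> y0")
        case False
        define D where "D = rk1 \<psi> y0 - T"
        have D0: "norm D > 0" using False by (simp add: D_def)
        define t where "t = min (1/2) (\<epsilon> / (2 * norm D))"
        have t1: "0 < t" "t \<le> 1/2" using eps D0 by (auto simp: t_def)
        have t2: "t * norm D \<le> \<epsilon> / 2"
        proof -
          have "t \<le> \<epsilon> / (2 * norm D)" by (simp add: t_def)
          then have "t * norm D \<le> \<epsilon> / (2 * norm D) * norm D" by (rule mult_right_mono) simp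
          also have "\<dots> = \<epsilon> / 2" using D0 by simp
          finally show ?thesis .
        qed
        define A where "A = T + t *\<^sub>R D"
        have Aapp: "A x = (1 - t) *\<^sub>R T x + (t * \<psi> x) *\<^sub>R y0" for x
          by (simp add: A_def D_def plus_blinfun.rep_eq scaleR_blinfun.rep_eq minus_blinfun.rep_eq
              algebra_simps)
        have Ax_le: "norm (A x) \<le> (1 - t) * norm (T x) + t * \<bar>\<psi> x\<bar>" for x
        proof -
          have "norm (A x) \<le> norm ((1 - t) *\<^sub>R T x) + norm ((t * \<psi> x) *\<^sub>R y0)"
            unfolding Aapp by (rule norm_triangle_ineq)
          also have "\<dots> = (1 - t) * norm (T x) + t * \<bar>\<psi> x\<bar>" using t1 y0n by (simp add: abs_mult)
          finally show ?thesis .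
        qed
        have Ax0: "A x0 = y0"
        proof -
          have "A x0 = (1 - t) *\<^sub>R y0 + t *\<^sub>R y0" using psi1 by (simp add: Aapp y0_def)
          also have "\<dots> = y0" by (simp add: algebra_simps)
          finally show ?thesis .
        qed
        have nA_le: "norm A \<le> 1"
        proof (rule sphere_bound)
          fix x :: 'a assume x: "x \<in> sphere 0 1"
          have "norm (A x) \<le> (1 - t) * norm (T x) + t * \<bar>\<psi> x\<bar>" by (rule Ax_le)
          also have "\<dots> \<le> (1 - t) * 1 + t * 1"
            using Tle[OF x(1)] psiT[of x] t1 by (intro add_mono mult_left_mono) auto
          finally show "norm (A x) \<le> 1" by simp
        qed simp
        have nA: "norm A = 1"
        proof -
          have "norm (A x0) \<le> norm A * norm x0" by (rule norm_blinfun)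
          then show ?thesis using nA_le Ax0 y0n x0 by simp
        qed
        have uniqA: "\<forall>x\<in>sphere 0 1. norm (A x) = 1 \<longrightarrow> x = x0 \<or> x = - x0"
        proof (intro ballI impI)
          fix x :: 'a assume x: "x \<in> sphere 0 1" "norm (A x) = 1"
          have "1 \<le> (1 - t) * norm (T x) + t * \<bar>\<psi> x\<bar>" using Ax_le[of x] x by simp
          also have "\<dots> \<le> (1 - t) * norm (T x) + t * 1"
            using psiT[of x] Tle[OF x(1)] t1 by (intro add_mono mult_left_mono) auto
          finally have "(1 - t) * 1 \<le> (1 - t) * norm (T x)" by simp
          then have "1 \<le> norm (T x)" using t1 by simp
          then have "norm (T x) = 1" using Tle[OF x(1)] by simp
          then show "x = x0 \<or> x = - x0" using uniq x by auto
        qed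
        have sA: "smooth_point A"
          by (rule unique_norming_smooth[OF cpt assms(6) nA x0(1)]) (use Ax0 y0n uniqA in auto)
        have ATeq: "A - T = t *\<^sub>R D" by (simp add: A_def)
        have AT: "norm (A - T) < \<epsilon>" using t1 t2 eps unfolding ATeq by simp
        have AneT: "A \<noteq> T"
        proof
          assume "A = T"
          then have "t *\<^sub>R D = 0" using ATeq by simp
          then show False using t1 D0 by simp
        qed
        show ?thesis using BPB_of[OF cpt assms(7) uniq x0(1) nA _ AT] Ax0 y0n sA AneT by auto
      next
        case True
        obtain z :: 'b where z: "\<forall>c. z \<noteq> c *\<^sub>R y0" using exists_nonmultiple[OF assms(4)] by blast
        have z0: "z \<noteq> 0" using z by (metis scaleR_zero_left)
        have nz: "norm z > 0" using z0 by simp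
        define s where "s = min (1 / (4 * norm z)) (\<epsilon> / (4 * norm z))"
        have s0: "s > 0" using eps nz by (simp add: s_def)
        have s1: "s * norm z \<le> 1/4"
        proof -
          have "s \<le> 1 / (4 * norm z)" by (simp add: s_def)
          then have "s * norm z \<le> 1 / (4 * norm z) * norm z" by (rule mult_right_mono) simp
          then show ?thesis using nz by simp
        qed
        have s2: "s * norm z \<le> \<epsilon>/4"
        proof -
          have "s \<le> \<epsilon> / (4 * norm z)" by (simp add: s_def)
          then have "s * norm z \<le> \<epsilon> / (4 * norm z) * norm z" by (rule mult_right_mono) simp
          then show ?thesis using nz by simp
        qed
        define v where "v = y0 + s *\<^sub>R z"
        have vy: "norm (v - y0) = s * norm z" using s0 by (simp add: v_def)
        have tri3: "\<bar>norm v - norm y0\<bar> \<le> norm (v - y0)" by (rule norm_triangle_ineq3)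
        have nv: "norm v \<ge> 3/4" using tri3 vy s1 y0n by simp
        define w where "w = (1 / norm v) *\<^sub>R v"
        have v0: "v \<noteq> 0" using nv by auto
        have nw: "norm w = 1" using v0 by (simp add: w_def)
        have wv: "norm (w - v) \<le> s * norm z"
        proof -
          have "w - v = (1 / norm v - 1) *\<^sub>R v" by (simp add: w_def algebra_simps)
          then have "norm (w - v) = \<bar>1 / norm v - 1\<bar> * norm v" by simp
          also have "\<dots> = \<bar>(1 / norm v - 1) * norm v\<bar>" by (simp add: abs_mult)
          also have "(1 / norm v - 1) * norm v = 1 - norm v" using v0 by (simp add: field_simps)
          finally have "norm (w - v) = \<bar>1 - norm v\<bar>" .
          also have "\<dots> = \<bar>norm v - norm y0\<bar>" using y0n by simp
          also have "\<dots> \<le> s * norm z" using tri3 vy by simp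
          finally show ?thesis .
        qed
        have wy: "norm (w - y0) < \<epsilon>"
        proof -
          have "norm (w - y0) \<le> norm (w - v) + norm (v - y0)"
            using norm_triangle_ineq[of "w - v" "v - y0"] by simp
          also have "\<dots> \<le> \<epsilon> / 2" using wv vy s2 by simp
          finally show ?thesis using eps by simp
        qed
        have wney: "w \<noteq> y0"
        proof
          assume wy0: "w = y0"
          have "v = norm v *\<^sub>R w" using nv by (simp add: w_def)
          then have "y0 + s *\<^sub>R z = norm v *\<^sub>R y0" using wy0 by (simp add: v_def)
          then have "s *\<^sub>R z = (norm v - 1) *\<^sub>R y0" by (simp add: algebra_simps)
          then have "(1 / s) *\<^sub>R (s *\<^sub>R z) = (1 / s) *\<^sub>R ((norm v - 1) *\<^sub>R y0)" by simp
          then have "z = ((norm v - 1) / s) *\<^sub>R y0" using s0 by simp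
          then show False using z by blast
        qed
        define A where "A = rk1 \<psi> w"
        have Ax0: "A x0 = w" using psi1 by (simp add: A_def)
        have nA: "norm A = 1"
        proof -
          have "norm A \<le> 1" using norm_rk1[of \<psi> w] npsi nw by (simp add: A_def)
          moreover have "norm (A x0) \<le> norm A * norm x0" by (rule norm_blinfun)
          ultimately show ?thesis using Ax0 nw x0 by simp
        qed
        have uniqA: "\<forall>x\<in>sphere 0 1. norm (A x) = 1 \<longrightarrow> x = x0 \<or> x = - x0"
        proof (intro ballI impI)
          fix x :: 'a assume x: "x \<in> sphere 0 1" "norm (A x) = 1"
          then have "\<bar>\<psi> x\<bar> = 1" using nw by (simp add: A_def)
          then have "norm (T x) = 1" using psiT[of x] Tle[OF x(1)] by simp
          then show "x = x0 \<or> x = - x0" using uniq x by auto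
        qed
        have sA: "smooth_point A"
          by (rule unique_norming_smooth[OF cpt assms(6) nA x0(1)]) (use Ax0 nw uniqA in auto)
        have AneT: "A \<noteq> T"
        proof
          assume "A = T"
          then have "A x0 = T x0" by simp
          then show False using Ax0 wney by (simp add: y0_def)
        qed
        have "A - T = rk1 \<psi> (w - y0)" using True by (simp add: A_def rk1_diff)
        then have "norm (A - T) \<le> norm \<psi> * norm (w - y0)" using norm_rk1[of \<psi> "w - y0"] by simp
        also have "\<dots> \<le> 1 * norm (w - y0)" using npsi by (intro mult_right_mono) auto
        finally have AT: "norm (A - T) < \<epsilon>" using wy by simp
        show ?thesis using BPB_of[OF cpt assms(7) uniq x0(1) nA _ AT] Ax0 nw sA AneT by auto
      qed
    qed
  next
    assume H: "\<forall>\<epsilon>>0. \<exists>A. uniform_BPB_approx \<epsilon> T A \<and> A \<noteq> T \<and> smooth_point A"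
    show "smooth_point T"
    proof (rule unique_norming_smooth[OF cpt assms(6) assms(7) x0])
      show "\<forall>x\<in>sphere 0 1. norm (T x) = 1 \<longrightarrow> x = x0 \<or> x = - x0"
      proof (intro ballI impI, rule ccontr)
        fix x assume x: "x \<in> sphere 0 1" "norm (T x) = 1" and nx: "\<not> (x = x0 \<or> x = - x0)"
        define \<eta> where "\<eta> = min (norm (x - x0)) (norm (x + x0))"
        have "x + x0 \<noteq> 0" using nx by (metis add.commute add_eq_0_iff)
        then have eta: "\<eta> > 0" using nx by (simp add: \<eta>_def)
        obtain A where A: "uniform_BPB_approx (\<eta>/2) T A" "smooth_point A"
          using H eta by (meson half_gt_zero)
        from A(1) obtain \<delta> where nA: "norm A = 1" and dl: "\<delta> > 0"
          "\<forall>x0\<in>sphere 0 1. norm (T x0) > 1 - \<delta> \<longrightarrow>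
             (\<exists>u0\<in>sphere 0 1. norm (A u0) = 1 \<and> norm (u0 - x0) < \<eta>/2 \<and> norm (A - T) < \<eta>/2)"
          unfolding uniform_BPB_approx_def by blast
        obtain u1 where u1: "u1 \<in> sphere 0 1" "norm (A u1) = 1" "norm (u1 - x0) < \<eta>/2"
          using dl x0 by force
        obtain u2 where u2: "u2 \<in> sphere 0 1" "norm (A u2) = 1" "norm (u2 - x) < \<eta>/2"
          using dl x by force
        have "u2 = u1 \<or> u2 = - u1"
          by (rule smooth_unique_norming[OF assms(5,6) A(2) nA u1(1,2) u2(1,2)])
        then show False
        proof
          assume e: "u2 = u1"
          have "x - x0 = (x - u2) + (u1 - x0)" using e by simp
          then have "norm (x - x0) \<le> norm (x - u2) + norm (u1 - x0)" by (metis norm_triangle_ineq)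
          moreover have "norm (x - u2) = norm (u2 - x)" by (rule norm_minus_commute)
          ultimately have "norm (x - x0) < \<eta>" using u1 u2 by simp
          then show False by (simp add: \<eta>_def)
        next
          assume e: "u2 = - u1"
          have "x + x0 = (x - u2) - (u1 - x0)" using e by simp
          then have "norm (x + x0) \<le> norm (x - u2) + norm (u1 - x0)" by (metis norm_triangle_ineq4)
          moreover have "norm (x - u2) = norm (u2 - x)" by (rule norm_minus_commute)
          ultimately have "norm (x + x0) < \<eta>" using u1 u2 by simp
          then show False by (simp add: \<eta>_def)
        qed
      qed
    qed
  qed
qed

end
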